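(* Let $(u_n)_{n\in\mathbb Z}$ be a 4-chain. Then infinitely many terms $u_n$ are divisible by $3$, and no term $u_n$ is divisible by $2$, by $5$, or by $7$.
   Context: A 4-chain is a bi-infinite sequence of integers $(u_n)_{n\in\mathbb Z}$ satisfying $u_{n-1}u_{n+1}=u_n^3+u_n^{f(n)}+1$ for all $n\in\mathbb Z$, where $f(n)=1$ if $n\equiv 0,3\pmod 4$ and $f(n)=2$ if $n\equiv 1,2\pmod 4$. *)

theory Defs
  imports Main
begin

definition chain_exp :: "int \<Rightarrow> nat" where
  "chain_exp n = (if n mod 4 = 0 \<or> n mod 4 = 3 then 1 else 2)"

definition four_chain :: "(int \<Rightarrow> int) \<Rightarrow> bool" where
  "four_chain u \<longleftrightarrow>
     (\<forall>n::int. u (n - 1) * u (n + 1) = u n ^ 3 + u n ^ chain_exp n + 1)"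

end

theory Submission
  imports Defs
begin

lemma red: "((b::int)^3 + b^e + 1) mod p = ((b mod p)^3 + (b mod p)^e + 1) mod p"
proof -
  have A: "\<And>x y z::int. (x + y + z) mod p = (x mod p + y mod p + z) mod p"
    by (metis mod_add_left_eq mod_add_right_eq)
  have "((b::int)^3 + b^e + 1) mod p = ((b^3 mod p) + (b^e mod p) + 1) mod p"
    by (rule A)
  also have "\<dots> = (((b mod p)^3 mod p) + ((b mod p)^e mod p) + 1) mod p"
    by (simp only: power_mod)
  also have "\<dots> = ((b mod p)^3 + (b mod p)^e + 1) mod p"
    by (rule A[symmetric])
  finally show ?thesis .
qed
lemma noroot:
  fixes b :: int
  assumes "p \<in> {2,5,7}" "e \<in> {1,2}"
  shows "\<not> p dvd (b^3 + b^e + 1)"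
proof -
  define r where "r = b mod p"
  have r: "(b^3 + b^e + 1) mod p = (r^3 + r^e + 1) mod p" unfolding r_def by (rule red)
  have "0 \<le> r" "r < p" using assms(1) by (auto simp: r_def)
  then have "(r^3 + r^e + 1) mod p \<noteq> 0"
  proof -
    assume h: "0 \<le> r" "r < p"
    consider "p = 2" | "p = 5" | "p = 7" using assms(1) by auto
    then show ?thesis
    proof cases
      case 1
      then have "r = 0 \<or> r = 1" using h by linarith
      then show ?thesis using 1 assms(2) by fastforce
    next
      case 2
      then have "r = 0 \<or> r = 1 \<or> r = 2 \<or> r = 3 \<or> r = 4" using h by linarith
      then show ?thesis using 2 assms(2) by fastforce
    next
      case 3
      then have "r = 0 \<or> r = 1 \<or> r = 2 \<or> r = 3 \<or> r = 4 \<or> r = 5 \<or> r = 6" using h by linarith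
      then show ?thesis using 3 assms(2) by fastforce
    qed
  qed
  then show ?thesis unfolding dvd_eq_mod_eq_0 r .
qed

lemma chain_exp_in: "chain_exp n \<in> {1,2}"
  by (simp add: chain_exp_def)

lemma rel: "four_chain u \<Longrightarrow> u (n - 1) * u (n + 1) = u n ^ 3 + u n ^ chain_exp n + 1"
  by (simp add: four_chain_def)

lemma lemA:
  fixes a b c :: int
  assumes "\<not> 3 dvd a" "\<not> 3 dvd c" "a * c = b^3 + b^e + 1" "e \<in> {1,2}"
  shows "b mod 3 = 2 \<or> b mod 3 = 0"
proof (rule ccontr)
  assume "\<not> ?thesis"
  moreover have "0 \<le> b mod 3" "b mod 3 < 3" by simp_all
  ultimately have b1: "b mod 3 = 1" by linarith
  have "(b^3 + b^e + 1) mod 3 = ((b mod 3)^3 + (b mod 3)^e + 1) mod 3" by (rule red)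
  also have "\<dots> = 0" unfolding b1 by simp
  finally have m0: "(a * c) mod 3 = 0" using assms(3) by simp
  have "(a*c) mod 3 = ((a mod 3) * (c mod 3)) mod 3" by (simp add: mod_mult_eq)
  moreover have "0 \<le> a mod 3" "a mod 3 < 3" "a mod 3 \<noteq> 0" using assms(1) by (simp_all add: dvd_eq_mod_eq_0)
  moreover have "0 \<le> c mod 3" "c mod 3 < 3" "c mod 3 \<noteq> 0" using assms(2) by (simp_all add: dvd_eq_mod_eq_0)
  ultimately have "(a mod 3 = 1 \<or> a mod 3 = 2) \<and> (c mod 3 = 1 \<or> c mod 3 = 2)" 
    and e: "(a*c) mod 3 = ((a mod 3) * (c mod 3)) mod 3" by linarith+
  then show False using m0 by auto
qed

lemma lemB:
  fixes a b c :: int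
  assumes "a mod 3 = 2" "b mod 3 = 2" "c mod 3 = 2" "a * c = b^3 + b^1 + 1"
  shows False
proof -
  have "(a*c) mod 3 = ((a mod 3) * (c mod 3)) mod 3" by (simp add: mod_mult_eq)
  also have "\<dots> = 1" using assms by simp
  finally have 1: "(a*c) mod 3 = 1" .
  have "(b^3 + b^1 + 1) mod 3 = ((b mod 3)^3 + (b mod 3)^1 + 1) mod 3" by (rule red)
  also have "\<dots> = 2" using assms by simp
  finally show False using 1 assms(4) by simp
qed

lemma window:
  assumes "four_chain u"
  shows "\<exists>m\<ge>n. 3 dvd u m"
proof (rule ccontr)
  assume "\<not> ?thesis"
  then have nd: "\<And>m. m \<ge> n \<Longrightarrow> \<not> 3 dvd u m" by auto
  have two: "u m mod 3 = 2" if "m \<ge> n + 1" for m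
  proof -
    have "u m mod 3 = 2 \<or> u m mod 3 = 0"
      using lemA[OF nd nd rel[OF assms, of m] chain_exp_in] that by auto
    moreover have "u m mod 3 \<noteq> 0" using nd[of m] that by (auto simp: dvd_eq_mod_eq_0)
    ultimately show ?thesis by auto
  qed
  have "\<exists>k\<in>{n+2, n+3, n+4}. chain_exp k = 1"
  proof -
    have "(n+2) mod 4 = 0 \<or> (n+2) mod 4 = 3 \<or> (n+3) mod 4 = 0 \<or> (n+4) mod 4 = 0 \<or> (n+4) mod 4 = 3" by presburger
    then show ?thesis unfolding chain_exp_def by auto
  qed
  then obtain k where k0: "k \<in> {n+2, n+3, n+4}" and k2: "chain_exp k = 1" by blast
  have k1: "k \<ge> n + 2" using k0 by auto
  note k = k1 k2
  show False
    using lemB[OF two two two, of "k - 1" k "k + 1"] rel[OF assms, of k] k by simp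
qed

theorem theorem7:
  fixes u :: "int \<Rightarrow> int"
  assumes "four_chain u"
  shows "infinite {n::int. (3::int) dvd u n}
         \<and> (\<forall>n. \<not> (2::int) dvd u n \<and> \<not> (5::int) dvd u n \<and> \<not> (7::int) dvd u n)"
proof
  show "infinite {n::int. (3::int) dvd u n}"
  proof
    assume f: "finite {n::int. (3::int) dvd u n}"
    obtain m where "m \<ge> Max ({n::int. (3::int) dvd u n} \<union> {0}) + 1" "3 dvd u m"
      using window[OF assms] by blast
    moreover have "m \<le> Max ({n::int. (3::int) dvd u n} \<union> {0})"
      using f calculation(2) by (intro Max_ge) auto
    ultimately show False by simp
  qed
next
  have gen: "\<not> p dvd u n" if "p \<in> {2,5,7}" for p n
  proof
    assume "p dvd u n"
    then have "p dvd u n * u (n + 1 + 1)" by simp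
    then have "p dvd u (n+1) ^ 3 + u (n+1) ^ chain_exp (n+1) + 1"
      using rel[OF assms, of "n+1"] by simp
    then show False using noroot[OF that chain_exp_in] by blast
  qed
  show "\<forall>n. \<not> (2::int) dvd u n \<and> \<not> (5::int) dvd u n \<and> \<not> (7::int) dvd u n"
    using gen by auto
qed

end
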